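(* Let $1\le n\le L$. The map sending $w\in\Omega'^{\{1\}}$ to the collection of sets $B_1,\dots,B_n$, where $B_i\subseteq\{1,\dots,L\}$ is the set of positions of the letters $\bullet_i$ and $\Box_i$ in $w$, is a bijection from $\Omega'^{\{1\}}$ onto the set of (unordered) set partitions of $\{1,\dots,L\}$ into exactly $n$ nonempty blocks.
   Context: Particle labels are taken modulo $n$. $\Omega_{L,n}$ is the set of words $w_1\cdots w_L$ on the ring $\mathbb{Z}/L\mathbb{Z}$ over the alphabet $\{\bullet_1,\dots,\bullet_n,\Box_1,\dots,\Box_n\}$ in which each $\bullet_k$ occurs exactly once, the $\bullet_1,\dots,\bullet_n$ appear in this cyclic order, and the remaining $L-n$ letters are arbitrary $\Box_i$'s. For $w\in\Omega_{L,n}$ let $b_k$ be the position of $\bullet_k$ and $C_k$ the set of positions strictly between $b_k$ and $b_{k+1}$ going cyclically forward ($b_{n+1}=b_1$). For $i,k\in\{1,\dots,n\}$ set $w_\Box(i,k)=p_1\cdots p_{i-1}q_{i+1}\cdots q_kp_{k+1}\cdots p_n$ if $i\le k$ and $w_\Box(i,k)=q_1\cdots q_kp_{k+1}\cdots p_{i-1}q_{i+1}\cdots q_n$ if $k<i$ (empty products are $1$), monomials in indeterminates. The weight is the monomial $\mathrm{wt}(w)=\prod_{k=1}^n\prod_{j\in C_k}w_\Box(i_j,k)$ where $w_j=\Box_{i_j}$. $\Omega'^{\{1\}}$ is the set of $w\in\Omega_{L,n}$ with $w_1=\bullet_1$ whose weight monomial does not contain $q_1$ (i.e. $\mathrm{wt}(w)\ne0$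 when $q_1=0$ and all other rates are positive). *)

theory Defs
  imports Main "HOL-Library.Disjoint_Sets"
begin

text \<open>Letters: Bullet k stands for the particle letter with label k, Box i for the
  vacancy letter with label i (labels range over 1..n).\<close>
datatype letter = Bullet nat | Box nat

text \<open>Indeterminates p_i, q_i.  A monomial is represented by its exponent vector.\<close>
datatype var = p nat | q nat

type_synonym monomial = "var \<Rightarrow> nat"

definition letter_at :: "letter list \<Rightarrow> nat \<Rightarrow> letter" where
  "letter_at w j = w ! (j - 1)"

definition valid_letter :: "nat \<Rightarrow> letter \<Rightarrow> bool" where
  "valid_letter n c \<longleftrightarrow> (case c of Bullet k \<Rightarrow> 1 \<le> k \<and> k \<le> n | Box i \<Rightarrow> 1 \<le> i \<and> i \<le> n)"

definition bpos :: "nat \<Rightarrow> letter list \<Rightarrow> nat \<Rightarrow> nat" where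
  "bpos L w k = (THE j. j \<in> {1..L} \<and> letter_at w j = Bullet k)"

text \<open>Next label modulo n (labels 1..n), so that b_{n+1} = b_1.\<close>
definition next_lab :: "nat \<Rightarrow> nat \<Rightarrow> nat" where
  "next_lab n k = (if k = n then 1 else k + 1)"

definition Omega :: "nat \<Rightarrow> nat \<Rightarrow> letter list set" where
  "Omega L n = {w. length w = L \<and> (\<forall>c \<in> set w. valid_letter n c)
     \<and> (\<forall>k \<in> {1..n}. card {j \<in> {1..L}. letter_at w j = Bullet k} = 1)
     \<and> (\<forall>k \<in> {1..<n}. (int (bpos L w k) - int (bpos L w 1)) mod int L
                       < (int (bpos L w (k+1)) - int (bpos L w 1)) mod int L)}"

text \<open>C_k: positions strictly between b_k and b_{k+1}, going cyclically forward
  (for n = 1 this is every position other than b_1).\<close>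
definition gap :: "nat \<Rightarrow> nat \<Rightarrow> letter list \<Rightarrow> nat \<Rightarrow> nat set" where
  "gap L n w k = {j \<in> {1..L}.
     let d = (int (bpos L w (next_lab n k)) - int (bpos L w k)) mod int L;
         d' = (if d = 0 then int L else d);
         e = (int j - int (bpos L w k)) mod int L
     in 0 < e \<and> e < d'}"

definition wbox :: "nat \<Rightarrow> nat \<Rightarrow> nat \<Rightarrow> monomial" where
  "wbox n i k v =
     (if i \<le> k then
        (case v of p m \<Rightarrow> (if (1 \<le> m \<and> m \<le> i - 1) \<or> (k + 1 \<le> m \<and> m \<le> n) then 1 else 0)
                 | q m \<Rightarrow> (if i + 1 \<le> m \<and> m \<le> k then 1 else 0))
      else
        (case v of q m \<Rightarrow> (if (1 \<le> m \<and> m \<le> k) \<or> (i + 1 \<le> m \<and> m \<le> n) then 1 else 0)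
                 | p m \<Rightarrow> (if k + 1 \<le> m \<and> m \<le> i - 1 then 1 else 0)))"

text \<open>Exponent vector of wt(w) = prod_k prod_{j in C_k} w_Box(i_j, k).\<close>
definition wt :: "nat \<Rightarrow> nat \<Rightarrow> letter list \<Rightarrow> monomial" where
  "wt L n w v = (\<Sum>k\<in>{1..n}. \<Sum>j\<in>gap L n w k.
      (case letter_at w j of Box i \<Rightarrow> wbox n i k v | Bullet _ \<Rightarrow> 0))"

definition Omega'1 :: "nat \<Rightarrow> nat \<Rightarrow> letter list set" where
  "Omega'1 L n = {w \<in> Omega L n. letter_at w 1 = Bullet 1 \<and> wt L n w (q 1) = 0}"

definition block :: "nat \<Rightarrow> letter list \<Rightarrow> nat \<Rightarrow> nat set" where
  "block L w i = {j \<in> {1..L}. letter_at w j = Bullet i \<or> letter_at w j = Box i}"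

definition blocks :: "nat \<Rightarrow> nat \<Rightarrow> letter list \<Rightarrow> nat set set" where
  "blocks L n w = block L w ` {1..n}"

end

theory Submission
  imports Defs
begin

definition good0 :: "nat \<Rightarrow> nat \<Rightarrow> letter list \<Rightarrow> (nat \<Rightarrow> nat) \<Rightarrow> bool" where
 "good0 L n w b \<longleftrightarrow> 1 \<le> n \<and> n \<le> L \<and> length w = L \<and> (\<forall>c\<in>set w. valid_letter n c)
   \<and> (\<forall>k\<in>{1..n}. b k \<in> {1..L} \<and> letter_at w (b k) = Bullet k)
   \<and> (\<forall>j\<in>{1..L}. \<forall>k. letter_at w j = Bullet k \<longrightarrow> j = b k)
   \<and> b 1 = 1 \<and> (\<forall>k\<in>{1..<n}. b k < b (Suc k))"

lemma good0D:
  assumes "good0 L n w b"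
  shows "1 \<le> n" "n \<le> L" "length w = L" "\<forall>c\<in>set w. valid_letter n c"
    "\<And>k. k \<in> {1..n} \<Longrightarrow> b k \<in> {1..L}"
    "\<And>k. k \<in> {1..n} \<Longrightarrow> letter_at w (b k) = Bullet k"
    "\<And>j k. j \<in> {1..L} \<Longrightarrow> letter_at w j = Bullet k \<Longrightarrow> j = b k"
    "b 1 = 1" "\<And>k. k \<in> {1..<n} \<Longrightarrow> b k < b (Suc k)"
  using assms unfolding good0_def by blast+

lemma good0_smono:
  assumes "good0 L n w b" "k < k'" "k' \<le> n" "1 \<le> k"
  shows "b k < b k'"
  using assms(2,3)
proof (induction k')
  case 0 then show ?case by simp
next
  case (Suc m)
  have st: "b m < b (Suc m)" using assms(1,4) Suc.prems unfolding good0_def by auto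
  show ?case
  proof (cases "k = m")
    case True then show ?thesis using st by simp
  next
    case False then show ?thesis using Suc st by auto
  qed
qed

lemma good0_mono:
  assumes "good0 L n w b" "k \<le> k'" "k' \<le> n" "1 \<le> k"
  shows "b k \<le> b k'"
  using good0_smono[OF assms(1) _ assms(3,4)] assms(2) by (cases "k = k'") auto

lemma letter_in_set: "j \<in> {1..L} \<Longrightarrow> length w = L \<Longrightarrow> letter_at w j \<in> set w"
  unfolding letter_at_def by auto

lemma good0_bpos:
  assumes "good0 L n w b" "k \<in> {1..n}"
  shows "bpos L w k = b k"
  unfolding bpos_def
proof (rule the_equality)
  show "b k \<in> {1..L} \<and> letter_at w (b k) = Bullet k" using assms unfolding good0_def by auto
  fix j assume "j \<in> {1..L} \<and> letter_at w j = Bullet k"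
  then show "j = b k" using assms unfolding good0_def by auto
qed

lemma modL:
  assumes "1 \<le> x" "x \<le> L" "1 \<le> y" "y \<le> L"
  shows "(int x - int y) mod int L = (if y \<le> x then int x - int y else int x - int y + int L)"
proof (cases "y \<le> x")
  case True then show ?thesis using assms by (simp add: mod_pos_pos_trivial)
next
  case False
  have "(int x - int y) mod int L = (int x - int y + int L) mod int L" by simp
  also have "\<dots> = int x - int y + int L" using assms False by (intro mod_pos_pos_trivial) auto
  finally show ?thesis using False by simp
qed

lemma gap_iff:
  assumes g: "good0 L n w b" and k: "k \<in> {1..n}" and j: "j \<in> {1..L}"
  shows "j \<in> gap L n w k \<longleftrightarrow> b k < j \<and> (k < n \<longrightarrow> j < b (Suc k))"
proof -
  have bk: "bpos L w k = b k" using good0_bpos[OF g k] .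
  have bkr: "b k \<in> {1..L}" using g k unfolding good0_def by auto
  show ?thesis
  proof (cases "k = n")
    case True
    have nl: "next_lab n k = 1" using True by (simp add: next_lab_def)
    have b1: "bpos L w 1 = 1" using good0_bpos[OF g] g unfolding good0_def by auto
    show ?thesis
    proof (cases "b k = 1")
      case bk1: True
      then show ?thesis using j True unfolding gap_def Let_def nl b1 bk
        by (auto simp: modL[OF _ _ bkr[THEN atLeastAtMost_iff[THEN iffD1], THEN conjunct1]])
    next
      case False
      have d: "(1 - int (b k)) mod int L = 1 - int (b k) + int L"
        using modL[of 1 L "b k"] bkr False by auto
      have e: "(int j - int (b k)) mod int L = (if b k \<le> j then int j - int (b k) else int j - int (b k) + int L)"
        using modL[of j L "b k"] bkr j by auto
      show ?thesis using j bkr False True[THEN sym, THEN eq_imp_le, THEN leD] unfolding gap_def Let_def nl b1 bk of_nat_1 d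
        by (auto simp: e)
    qed
  next
    case False
    have kn: "k < n" using k False by auto
    have nl: "next_lab n k = Suc k" using False by (simp add: next_lab_def)
    have bk1: "bpos L w (Suc k) = b (Suc k)" using good0_bpos[OF g] k kn by auto
    have bkr1: "b (Suc k) \<in> {1..L}" using g k kn unfolding good0_def by auto
    have lt: "b k < b (Suc k)" using g k kn unfolding good0_def by auto
    have d: "(int (b (Suc k)) - int (b k)) mod int L = int (b (Suc k)) - int (b k)"
      using modL[of "b (Suc k)" L "b k"] bkr bkr1 lt by auto
    have e: "(int j - int (b k)) mod int L = (if b k \<le> j then int j - int (b k) else int j - int (b k) + int L)"
      using modL[of j L "b k"] bkr j by auto
    show ?thesis using j kn bkr bkr1 lt unfolding gap_def Let_def nl bk bk1 d
      by (auto simp: e)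
  qed
qed

definition good :: "nat \<Rightarrow> nat \<Rightarrow> letter list \<Rightarrow> (nat \<Rightarrow> nat) \<Rightarrow> bool" where
 "good L n w b \<longleftrightarrow> good0 L n w b \<and> (\<forall>j\<in>{1..L}. \<forall>i. letter_at w j = Box i \<longrightarrow> b i < j)"

lemma gap_sub: "gap L n w k \<subseteq> {1..L}" unfolding gap_def by (rule Collect_restrict)

lemma valid_lab:
  assumes "length w = L" "\<forall>c\<in>set w. valid_letter n c" "j \<in> {1..L}"
  shows "letter_at w j = Box i \<Longrightarrow> i \<in> {1..n}" "letter_at w j = Bullet i \<Longrightarrow> i \<in> {1..n}"
  using assms letter_in_set[OF assms(3,1)] unfolding valid_letter_def by force+

lemma wt_zero_iff:
  "wt L n w (q 1) = 0 \<longleftrightarrow> (\<forall>k\<in>{1..n}. \<forall>j\<in>gap L n w k. \<forall>i. letter_at w j = Box i \<longrightarrow> wbox n i k (q 1) = 0)"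
proof -
  have fin: "finite (gap L n w k)" for k by (rule finite_subset[OF gap_sub]) simp
  have c: "((case letter_at w j of Box i \<Rightarrow> wbox n i k (q 1) | Bullet _ \<Rightarrow> 0) = 0) \<longleftrightarrow>
      (\<forall>i. letter_at w j = Box i \<longrightarrow> wbox n i k (q 1) = 0)" for j k
    by (cases "letter_at w j") simp_all
  have "wt L n w (q 1) = 0 \<longleftrightarrow> (\<forall>k\<in>{1..n}. \<forall>j\<in>gap L n w k.
      (case letter_at w j of Box i \<Rightarrow> wbox n i k (q 1) | Bullet _ \<Rightarrow> 0) = 0)"
    unfolding wt_def by (simp add: sum_eq_0_iff fin)
  then show ?thesis by (simp only: c)
qed

lemma wbox_q1: "1 \<le> k \<Longrightarrow> 1 \<le> i \<Longrightarrow> wbox n i k (q 1) = 0 \<longleftrightarrow> i \<le> k"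
  unfolding wbox_def by auto

lemma good_Omega:
  assumes g: "good L n w b"
  shows "w \<in> Omega'1 L n"
proof -
  have g0: "good0 L n w b" using g unfolding good_def by blast
  note G = good0D[OF g0]
  have bp: "\<And>k. k \<in> {1..n} \<Longrightarrow> bpos L w k = b k" using good0_bpos[OF g0] .
  have single: "{j \<in> {1..L}. letter_at w j = Bullet k} = {b k}" if "k \<in> {1..n}" for k
  proof
    show "{j \<in> {1..L}. letter_at w j = Bullet k} \<subseteq> {b k}" using G(7) by blast
    show "{b k} \<subseteq> {j \<in> {1..L}. letter_at w j = Bullet k}" using G(5,6) that by blast
  qed
  have ord: "(int (bpos L w k) - int (bpos L w 1)) mod int L
                       < (int (bpos L w (k+1)) - int (bpos L w 1)) mod int L" if k: "k \<in> {1..<n}" for k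
  proof -
    have kk: "k \<in> {1..n}" "Suc k \<in> {1..n}" "(1::nat) \<in> {1..n}" using k G(1) by auto
    have r: "b k \<in> {1..L}" "b (Suc k) \<in> {1..L}" "b k < b (Suc k)" using G(5)[OF kk(1)] G(5)[OF kk(2)] G(9)[OF k] by auto
    have e1: "(int (b k) - int 1) mod int L = int (b k) - 1" using modL[of "b k" L 1] r by auto
    have e2: "(int (b (Suc k)) - int 1) mod int L = int (b (Suc k)) - 1" using modL[of "b (Suc k)" L 1] r by auto
    show ?thesis unfolding bp[OF kk(1)] bp[OF kk(3)] Suc_eq_plus1[symmetric] bp[OF kk(2)] G(8) e1 e2
      using r(3) by simp
  qed
  have om: "w \<in> Omega L n" unfolding Omega_def mem_Collect_eq
    using G(3,4) single ord by simp
  have l1: "letter_at w 1 = Bullet 1" using G(6)[of 1] G(1) G(8) by simp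
  have wt0: "wt L n w (q 1) = 0"
    unfolding wt_zero_iff
  proof (intro ballI allI impI)
    fix k j i assume k: "k \<in> {1..n}" and j: "j \<in> gap L n w k" and li: "letter_at w j = Box i"
    have jr: "j \<in> {1..L}" using subsetD[OF gap_sub j] .
    have gi: "b k < j \<and> (k < n \<longrightarrow> j < b (Suc k))" using gap_iff[OF g0 k jr] j by blast
    have bi: "b i < j" using g jr li unfolding good_def by blast
    have ir: "i \<in> {1..n}" using valid_lab(1)[OF G(3,4) jr li] .
    have "i \<le> k"
    proof (rule ccontr)
      assume "\<not> i \<le> k"
      then have kn: "k < n" "Suc k \<le> i" using ir by auto
      then have "b (Suc k) \<le> b i" using good0_mono[OF g0, of "Suc k" i] ir by simp
      then show False using gi bi kn by simp
    qed
    then show "wbox n i k (q 1) = 0" using wbox_q1 k ir by simp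
  qed
  show ?thesis unfolding Omega'1_def using om l1 wt0 by blast
qed

lemma bposP:
  assumes w: "w \<in> Omega L n" and k: "k \<in> {1..n}"
  shows "bpos L w k \<in> {1..L}" "letter_at w (bpos L w k) = Bullet k"
    "\<And>j. j \<in> {1..L} \<Longrightarrow> letter_at w j = Bullet k \<Longrightarrow> j = bpos L w k"
proof -
  have "card {j \<in> {1..L}. letter_at w j = Bullet k} = 1" using w k unfolding Omega_def by blast
  then obtain x where x: "{j \<in> {1..L}. letter_at w j = Bullet k} = {x}" by (rule card_1_singletonE)
  have bx: "bpos L w k = x" unfolding bpos_def
  proof (rule the_equality)
    show "x \<in> {1..L} \<and> letter_at w x = Bullet k" using x by blast
    fix j assume "j \<in> {1..L} \<and> letter_at w j = Bullet k" then show "j = x" using x by blast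
  qed
  show "bpos L w k \<in> {1..L}" "letter_at w (bpos L w k) = Bullet k" using x bx by blast+
  show "\<And>j. j \<in> {1..L} \<Longrightarrow> letter_at w j = Bullet k \<Longrightarrow> j = bpos L w k" using x bx by blast
qed

lemma Omega_good:
  assumes n: "1 \<le> n" "n \<le> L" and w: "w \<in> Omega'1 L n"
  shows "good L n w (bpos L w)"
proof -
  have wO: "w \<in> Omega L n" and l1: "letter_at w 1 = Bullet 1" and wt0: "wt L n w (q 1) = 0"
    using w unfolding Omega'1_def by blast+
  have len: "length w = L" and val: "\<forall>c\<in>set w. valid_letter n c" using wO unfolding Omega_def by blast+
  have ordw: "\<And>k. k \<in> {1..<n} \<Longrightarrow> (int (bpos L w k) - int (bpos L w 1)) mod int L
                       < (int (bpos L w (k+1)) - int (bpos L w 1)) mod int L"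
    using wO unfolding Omega_def by blast
  have one: "(1::nat) \<in> {1..n}" "(1::nat) \<in> {1..L}" using n by auto
  have b1: "bpos L w 1 = 1" using bposP(3)[OF wO one(1) one(2) l1] by simp
  have uniq: "j = bpos L w k" if "j \<in> {1..L}" "letter_at w j = Bullet k" for j k
    using bposP(3)[OF wO valid_lab(2)[OF len val that] that] .
  have ord: "bpos L w k < bpos L w (Suc k)" if k: "k \<in> {1..<n}" for k
  proof -
    have kk: "k \<in> {1..n}" "Suc k \<in> {1..n}" using k by auto
    have r: "bpos L w k \<in> {1..L}" "bpos L w (Suc k) \<in> {1..L}" using bposP(1)[OF wO kk(1)] bposP(1)[OF wO kk(2)] by auto
    have e1: "(int (bpos L w k) - int 1) mod int L = int (bpos L w k) - 1" using modL[of "bpos L w k" L 1] r by auto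
    have e2: "(int (bpos L w (Suc k)) - int 1) mod int L = int (bpos L w (Suc k)) - 1" using modL[of "bpos L w (Suc k)" L 1] r by auto
    show ?thesis using ordw[OF k] unfolding b1 Suc_eq_plus1[symmetric] e1 e2 by simp
  qed
  have g0: "good0 L n (w) (bpos L w)" unfolding good0_def
    using n len val bposP(1,2)[OF wO] uniq b1 ord by blast
  have box: "bpos L w i < j" if j: "j \<in> {1..L}" and li: "letter_at w j = Box i" for j i
  proof (rule ccontr)
    assume "\<not> bpos L w i < j"
    have ir: "i \<in> {1..n}" using valid_lab(1)[OF len val j li] .
    have "j \<noteq> bpos L w i" using bposP(2)[OF wO ir] li by auto
    then have jlt: "j < bpos L w i" using \<open>\<not> bpos L w i < j\<close> by simp
    have j1: "j \<noteq> 1" using l1 li by auto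
    define K where "K = {k \<in> {1..n}. bpos L w k < j}"
    have Kf: "finite K" unfolding K_def by simp
    have K1: "1 \<in> K" unfolding K_def using one b1 j j1 by auto
    define k where "k = Max K"
    have kK: "k \<in> K" unfolding k_def using Kf K1 Max_in by blast
    have kmax: "\<And>k'. k' \<in> K \<Longrightarrow> k' \<le> k" unfolding k_def using Kf by simp
    have kr: "k \<in> {1..n}" and bk: "bpos L w k < j" using kK unfolding K_def by auto
    have ki: "k < i"
    proof (rule ccontr)
      assume "\<not> k < i"
      then have "bpos L w i \<le> bpos L w k" using good0_mono[OF g0, of i k] ir kr by simp
      then show False using bk jlt by simp
    qed
    then have kn: "k < n" using ir by simp
    have sk: "Suc k \<in> {1..n}" using kn kr by simp
    have "\<not> bpos L w (Suc k) < j"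
    proof
      assume "bpos L w (Suc k) < j"
      then have "Suc k \<in> K" unfolding K_def using sk by simp
      then show False using kmax by fastforce
    qed
    moreover have "bpos L w (Suc k) \<noteq> j" using bposP(2)[OF wO sk] li by auto
    ultimately have "j < bpos L w (Suc k)" by simp
    then have "j \<in> gap L n w k" using gap_iff[OF g0 kr j] bk by blast
    then have "wbox n i k (q 1) = 0" using wt0 kr li unfolding wt_zero_iff by blast
    then show False using wbox_q1[of k i n] kr ir ki by simp
  qed
  show ?thesis unfolding good_def using g0 box by blast
qed

definition lab :: "letter list \<Rightarrow> nat \<Rightarrow> nat" where
  "lab w j = (case letter_at w j of Bullet k \<Rightarrow> k | Box i \<Rightarrow> i)"

definition blk :: "nat set set \<Rightarrow> nat \<Rightarrow> nat set" where
  "blk P j = (THE B. B \<in> P \<and> j \<in> B)"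

definition rnk :: "nat set set \<Rightarrow> nat set \<Rightarrow> nat" where
  "rnk P B = card {B' \<in> P. Min B' \<le> Min B}"

definition decode :: "nat \<Rightarrow> nat set set \<Rightarrow> letter list" where
  "decode L P = map (\<lambda>j. if j = Min (blk P j) then Bullet (rnk P (blk P j)) else Box (rnk P (blk P j))) [1..<Suc L]"

lemma letter_at_decode:
  "j \<in> {1..L} \<Longrightarrow> letter_at (decode L P) j =
     (if j = Min (blk P j) then Bullet (rnk P (blk P j)) else Box (rnk P (blk P j)))"
proof -
  assume j: "j \<in> {1..L}"
  then have "j - 1 < length [1..<Suc L]" by auto
  moreover have "[1..<Suc L] ! (j - 1) = j" using j by (subst nth_upt) auto
  ultimately show ?thesis unfolding decode_def letter_at_def by (simp only: nth_map)
qed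

lemma length_decode: "length (decode L P) = L" unfolding decode_def by simp

lemma block_lab: "block L w i = {j \<in> {1..L}. lab w j = i}"
proof -
  have "(letter_at w j = Bullet i \<or> letter_at w j = Box i) \<longleftrightarrow> lab w j = i" for j
    by (cases "letter_at w j") (simp_all add: lab_def)
  then show ?thesis unfolding block_def by simp
qed

lemma good_block:
  assumes g: "good L n w b" and i: "i \<in> {1..n}"
  shows "b i \<in> block L w i" "Min (block L w i) = b i" "block L w i \<subseteq> {1..L}"
proof -
  have g0: "good0 L n w b" using g unfolding good_def by blast
  note G = good0D[OF g0]
  show bi: "b i \<in> block L w i" unfolding block_def using G(5,6)[OF i] by blast
  show "block L w i \<subseteq> {1..L}" unfolding block_def by blast
  have "b i \<le> j" if "j \<in> block L w i" for j
  proof -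
    have j: "j \<in> {1..L}" "letter_at w j = Bullet i \<or> letter_at w j = Box i" using that unfolding block_def by blast+
    then show ?thesis using G(7)[OF j(1)] g unfolding good_def by fastforce
  qed
  moreover have "finite (block L w i)" unfolding block_def by simp
  ultimately show "Min (block L w i) = b i" using bi by (intro Min_eqI) auto
qed

lemma good_smono: "good L n w b \<Longrightarrow> k < k' \<Longrightarrow> k' \<le> n \<Longrightarrow> 1 \<le> k \<Longrightarrow> b k < b k'"
  using good0_smono unfolding good_def by blast

lemma good_mono: "good L n w b \<Longrightarrow> k \<le> k' \<Longrightarrow> k' \<le> n \<Longrightarrow> 1 \<le> k \<Longrightarrow> b k \<le> b k'"
  using good0_mono unfolding good_def by blast

lemma good_lab:
  assumes g: "good L n w b" and j: "j \<in> {1..L}"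
  shows "lab w j \<in> {1..n}"
proof -
  have g0: "good0 L n w b" using g unfolding good_def by blast
  note G = good0D[OF g0]
  show ?thesis using valid_lab[OF G(3,4) j] unfolding lab_def by (cases "letter_at w j") auto
qed

lemma good_b_inj:
  assumes g: "good L n w b" and "i \<in> {1..n}" "i' \<in> {1..n}" "b i = b i'"
  shows "i = i'"
  using good_smono[OF g, of i i'] good_smono[OF g, of i' i] assms by (cases "i < i'"; cases "i' < i") auto

lemma good_partition:
  assumes g: "good L n w b"
  shows "partition_on {1..L} (blocks L n w)" "card (blocks L n w) = n" "inj_on (block L w) {1..n}"
proof -
  show inj: "inj_on (block L w) {1..n}"
  proof (rule inj_onI)
    fix i i' assume "i \<in> {1..n}" "i' \<in> {1..n}" "block L w i = block L w i'"
    then show "i = i'" using good_block(2)[OF g] good_b_inj[OF g] by metis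
  qed
  then show "card (blocks L n w) = n" unfolding blocks_def by (simp add: card_image)
  show "partition_on {1..L} (blocks L n w)" unfolding partition_on_def
  proof (intro conjI)
    show "\<Union> (blocks L n w) = {1..L}"
    proof
      show "\<Union> (blocks L n w) \<subseteq> {1..L}" unfolding blocks_def block_def by blast
      show "{1..L} \<subseteq> \<Union> (blocks L n w)"
      proof
        fix j assume j: "j \<in> {1..L}"
        then have "j \<in> block L w (lab w j)" unfolding block_lab by simp
        then show "j \<in> \<Union> (blocks L n w)" unfolding blocks_def using good_lab[OF g j] by blast
      qed
    qed
    show "disjoint (blocks L n w)" unfolding blocks_def block_lab
      by (auto simp: disjoint_def)
    show "{} \<notin> blocks L n w" unfolding blocks_def using good_block(1)[OF g] by blast
  qed
qed

lemma good_blk: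
  assumes g: "good L n w b" and j: "j \<in> {1..L}"
  shows "blk (blocks L n w) j = block L w (lab w j)"
  unfolding blk_def
proof (rule the_equality)
  show "block L w (lab w j) \<in> blocks L n w \<and> j \<in> block L w (lab w j)"
    unfolding blocks_def using good_lab[OF g j] j by (auto simp: block_lab)
  fix B assume "B \<in> blocks L n w \<and> j \<in> B"
  then show "B = block L w (lab w j)" unfolding blocks_def by (auto simp: block_lab)
qed

lemma good_rnk:
  assumes g: "good L n w b" and i: "i \<in> {1..n}"
  shows "rnk (blocks L n w) (block L w i) = i"
proof -
  have "{B' \<in> blocks L n w. Min B' \<le> Min (block L w i)} = block L w ` {i' \<in> {1..n}. b i' \<le> b i}"
    unfolding blocks_def good_block(2)[OF g i] using good_block(2)[OF g] by auto
  also have "{i' \<in> {1..n}. b i' \<le> b i} = {1..i}"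
  proof
    show "{i' \<in> {1..n}. b i' \<le> b i} \<subseteq> {1..i}"
    proof
      fix i' assume a: "i' \<in> {i' \<in> {1..n}. b i' \<le> b i}"
      have "\<not> i < i'" using good_smono[OF g, of i i'] a i by auto
      then show "i' \<in> {1..i}" using a by auto
    qed
    show "{1..i} \<subseteq> {i' \<in> {1..n}. b i' \<le> b i}" using good_mono[OF g] i by auto
  qed
  finally have e: "{B' \<in> blocks L n w. Min B' \<le> Min (block L w i)} = block L w ` {1..i}" .
  have "inj_on (block L w) {1..i}" by (rule inj_on_subset[OF good_partition(3)[OF g]]) (use i in auto)
  then show ?thesis unfolding rnk_def e by (simp add: card_image)
qed

lemma good_decode:
  assumes g: "good L n w b"
  shows "decode L (blocks L n w) = w"
proof -
  have g0: "good0 L n w b" using g unfolding good_def by blast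
  note G = good0D[OF g0]
  have pt: "letter_at (decode L (blocks L n w)) j = letter_at w j" if j: "j \<in> {1..L}" for j
  proof -
    have li: "lab w j \<in> {1..n}" using good_lab[OF g j] .
    have e: "letter_at (decode L (blocks L n w)) j = (if j = b (lab w j) then Bullet (lab w j) else Box (lab w j))"
      unfolding letter_at_decode[OF j] good_blk[OF g j] good_rnk[OF g li] good_block(2)[OF g li] ..
    show ?thesis
    proof (cases "letter_at w j")
      case (Bullet k)
      then show ?thesis using e G(7)[OF j] unfolding lab_def by simp
    next
      case (Box i)
      then have "b i < j" using g j unfolding good_def by blast
      then show ?thesis using e Box unfolding lab_def by simp
    qed
  qed
  show ?thesis
  proof (rule nth_equalityI)
    show "length (decode L (blocks L n w)) = length w" using length_decode G(3) by simp
    fix x assume "x < length (decode L (blocks L n w))"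
    then have x: "Suc x \<in> {1..L}" using length_decode by (simp add: Suc_le_eq)
    show "decode L (blocks L n w) ! x = w ! x" using pt[OF x] unfolding letter_at_def by simp
  qed
qed

lemma part_basic:
  fixes P :: "nat set set"
  assumes P: "partition_on {1..L} P"
  shows "finite P" "\<And>B. B \<in> P \<Longrightarrow> B \<noteq> {}" "\<And>B. B \<in> P \<Longrightarrow> B \<subseteq> {1..L}"
    "\<And>B. B \<in> P \<Longrightarrow> finite B"
    "\<And>B B'. B \<in> P \<Longrightarrow> B' \<in> P \<Longrightarrow> B \<noteq> B' \<Longrightarrow> B \<inter> B' = {}"
proof -
  have U: "\<Union>P = {1..L}" and D: "disjoint P" and E: "{} \<notin> P" using P unfolding partition_on_def by blast+
  show sub: "\<And>B. B \<in> P \<Longrightarrow> B \<subseteq> {1..L}" using U by blast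
  have "P \<subseteq> Pow {1..L}" using sub by blast
  then show "finite P" by (rule finite_subset) simp
  show "\<And>B. B \<in> P \<Longrightarrow> B \<noteq> {}" using E by blast
  show "\<And>B. B \<in> P \<Longrightarrow> finite B" using sub by (meson finite_atLeastAtMost rev_finite_subset)
  show "\<And>B B'. B \<in> P \<Longrightarrow> B' \<in> P \<Longrightarrow> B \<noteq> B' \<Longrightarrow> B \<inter> B' = {}" using D by (rule disjointD)
qed

lemma part_blk:
  fixes P :: "nat set set"
  assumes P: "partition_on {1..L} P" and j: "j \<in> {1..L}"
  shows "blk P j \<in> P" "j \<in> blk P j" "\<And>B. B \<in> P \<Longrightarrow> j \<in> B \<Longrightarrow> blk P j = B"
proof -
  have U: "\<Union>P = {1..L}" using P unfolding partition_on_def by blast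
  obtain B0 where B0: "B0 \<in> P" "j \<in> B0" using U j by blast
  have uq: "B = B0" if "B \<in> P" "j \<in> B" for B
  proof (rule ccontr)
    assume "B \<noteq> B0"
    then have "B \<inter> B0 = {}" using part_basic(5)[OF P that(1) B0(1)] by simp
    then show False using that(2) B0(2) by blast
  qed
  have e: "blk P j = B0" unfolding blk_def
  proof (rule the_equality)
    show "B0 \<in> P \<and> j \<in> B0" using B0 by simp
    fix B assume "B \<in> P \<and> j \<in> B" then show "B = B0" using uq by simp
  qed
  show "blk P j \<in> P" "j \<in> blk P j" using e B0 by simp_all
  show "\<And>B. B \<in> P \<Longrightarrow> j \<in> B \<Longrightarrow> blk P j = B" using e uq by simp
qed

lemma part_Min:
  fixes P :: "nat set set"
  assumes P: "partition_on {1..L} P" and B: "B \<in> P"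
  shows "Min B \<in> B" "Min B \<in> {1..L}" "\<And>x. x \<in> B \<Longrightarrow> Min B \<le> x"
  using Min_in[OF part_basic(4)[OF P B] part_basic(2)[OF P B]] part_basic(3)[OF P B]
    Min_le[OF part_basic(4)[OF P B]] by auto

lemma part_Min_inj:
  fixes P :: "nat set set"
  assumes P: "partition_on {1..L} P" and "B \<in> P" "B' \<in> P" "Min B = Min B'"
  shows "B = B'"
proof (rule ccontr)
  assume "B \<noteq> B'"
  then have "B \<inter> B' = {}" using part_basic(5)[OF P assms(2,3)] by simp
  moreover have "Min B \<in> B" "Min B \<in> B'" using part_Min(1)[OF P assms(2)] part_Min(1)[OF P assms(3)] assms(4) by simp_all
  ultimately show False by blast
qed

lemma rnk_less:
  fixes P :: "nat set set"
  assumes P: "partition_on {1..L} P" and B: "B \<in> P" "B' \<in> P" and lt: "Min B < Min B'"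
  shows "rnk P B < rnk P B'"
  unfolding rnk_def
proof (rule psubset_card_mono)
  show "finite {B'' \<in> P. Min B'' \<le> Min B'}" using part_basic(1)[OF P] by simp
  show "{B'' \<in> P. Min B'' \<le> Min B} \<subset> {B'' \<in> P. Min B'' \<le> Min B'}"
  proof
    show "{B'' \<in> P. Min B'' \<le> Min B} \<subseteq> {B'' \<in> P. Min B'' \<le> Min B'}" using lt by auto
    show "{B'' \<in> P. Min B'' \<le> Min B} \<noteq> {B'' \<in> P. Min B'' \<le> Min B'}"
    proof
      assume "{B'' \<in> P. Min B'' \<le> Min B} = {B'' \<in> P. Min B'' \<le> Min B'}"
      moreover have "B' \<in> {B'' \<in> P. Min B'' \<le> Min B'}" using B by simp
      ultimately have "Min B' \<le> Min B" by blast
      then show False using lt by simp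
    qed
  qed
qed

lemma rnk_range:
  fixes P :: "nat set set"
  assumes P: "partition_on {1..L} P" and B: "B \<in> P"
  shows "rnk P B \<in> {1..card P}"
proof -
  have f: "finite P" using part_basic(1)[OF P] .
  have "1 \<le> rnk P B"
  proof -
    have "finite {B' \<in> P. Min B' \<le> Min B}" using f by simp
    moreover have "B \<in> {B' \<in> P. Min B' \<le> Min B}" using B by simp
    ultimately have "0 < card {B' \<in> P. Min B' \<le> Min B}" using card_gt_0_iff by blast
    then show "1 \<le> rnk P B" unfolding rnk_def by simp
  qed
  moreover have "rnk P B \<le> card P" unfolding rnk_def using f by (intro card_mono) auto
  ultimately show ?thesis by simp
qed

lemma rnk_iff:
  fixes P :: "nat set set"
  assumes P: "partition_on {1..L} P" and B: "B \<in> P" "B' \<in> P"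
  shows "rnk P B < rnk P B' \<longleftrightarrow> Min B < Min B'"
proof
  assume r: "rnk P B < rnk P B'"
  show "Min B < Min B'"
  proof (rule ccontr)
    assume "\<not> Min B < Min B'"
    then have "Min B' < Min B \<or> Min B' = Min B" by auto
    then show False
    proof
      assume "Min B' < Min B" then show False using rnk_less[OF P B(2,1)] r by simp
    next
      assume "Min B' = Min B" then have "B = B'" using part_Min_inj[OF P B] by simp
      then show False using r by simp
    qed
  qed
qed (rule rnk_less[OF P B])

lemma rnk_inj:
  fixes P :: "nat set set"
  assumes P: "partition_on {1..L} P"
  shows "inj_on (rnk P) P"
proof (rule inj_onI)
  fix B B' assume B: "B \<in> P" "B' \<in> P" and e: "rnk P B = rnk P B'"
  have "\<not> Min B < Min B'" "\<not> Min B' < Min B" using rnk_iff[OF P B] rnk_iff[OF P B(2,1)] e by auto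
  then show "B = B'" using part_Min_inj[OF P B] by simp
qed

lemma rnk_img:
  fixes P :: "nat set set"
  assumes P: "partition_on {1..L} P"
  shows "rnk P ` P = {1..card P}"
proof (rule card_subset_eq)
  show "finite {1..card P}" by simp
  show "rnk P ` P \<subseteq> {1..card P}" using rnk_range[OF P] by blast
  show "card (rnk P ` P) = card {1..card P}" using card_image[OF rnk_inj[OF P]] by simp
qed

lemma part_good:
  fixes P :: "nat set set"
  assumes P: "partition_on {1..L} P" and c: "card P = n" and n: "1 \<le> n" "n \<le> L"
  shows "good L n (decode L P) (\<lambda>k. Min (inv_into P (rnk P) k))" "blocks L n (decode L P) = P"
proof -
  define Bk where "Bk = inv_into P (rnk P)"
  define b where "b = (\<lambda>k. Min (Bk k))"
  define D where "D = decode L P"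
  have img: "rnk P ` P = {1..n}" using rnk_img[OF P] c by simp
  have kimg: "k \<in> rnk P ` P" if "k \<in> {1..n}" for k using that img by simp
  have BkP: "Bk k \<in> P" if "k \<in> {1..n}" for k
    unfolding Bk_def by (rule inv_into_into[OF kimg[OF that]])
  have Bkr: "rnk P (Bk k) = k" if "k \<in> {1..n}" for k
    unfolding Bk_def by (rule f_inv_into_f[OF kimg[OF that]])
  have Bk_rnk: "Bk (rnk P B) = B" if "B \<in> P" for B
    unfolding Bk_def using inv_into_f_f[OF rnk_inj[OF P] that] .
  have ld: "letter_at D j = (if j = Min (blk P j) then Bullet (rnk P (blk P j)) else Box (rnk P (blk P j)))"
    if "j \<in> {1..L}" for j
    unfolding D_def using letter_at_decode[OF that] .
  have blkP: "blk P j \<in> P" "j \<in> blk P j" if "j \<in> {1..L}" for j using part_blk(1,2)[OF P that] by simp_all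
  have rr: "rnk P (blk P j) \<in> {1..n}" if "j \<in> {1..L}" for j using rnk_range[OF P blkP(1)[OF that]] c by simp
  have blkBk: "blk P j = Bk i" if "j \<in> {1..L}" "rnk P (blk P j) = i" for j i
    using Bk_rnk[OF blkP(1)[OF that(1)]] that(2) by simp
  have memBk: "j \<in> {1..L}" "blk P j = Bk i" if "i \<in> {1..n}" "j \<in> Bk i" for i j
  proof -
    show j: "j \<in> {1..L}" using part_basic(3)[OF P BkP[OF that(1)]] that(2) by blast
    show "blk P j = Bk i" using part_blk(3)[OF P j BkP[OF that(1)] that(2)] .
  qed
  have bL: "b k \<in> {1..L}" if "k \<in> {1..n}" for k unfolding b_def using part_Min(2)[OF P BkP[OF that]] .
  have bB: "b k \<in> Bk k" if "k \<in> {1..n}" for k unfolding b_def using part_Min(1)[OF P BkP[OF that]] .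
  have len: "length D = L" unfolding D_def by (rule length_decode)
  have val: "\<forall>c\<in>set D. valid_letter n c"
  proof
    fix c assume "c \<in> set D"
    then obtain x where x: "x < L" "c = D ! x" using len by (metis in_set_conv_nth)
    have j: "Suc x \<in> {1..L}" using x by simp
    have "c = letter_at D (Suc x)" unfolding letter_at_def using x by simp
    then show "valid_letter n c" using ld[OF j] rr[OF j] unfolding valid_letter_def by auto
  qed
  have bul: "letter_at D (b k) = Bullet k" if k: "k \<in> {1..n}" for k
  proof -
    have "blk P (b k) = Bk k" using memBk(2)[OF k bB[OF k]] .
    then show ?thesis using ld[OF bL[OF k]] Bkr[OF k] unfolding b_def by simp
  qed
  have uq: "j = b k" if j: "j \<in> {1..L}" and l: "letter_at D j = Bullet k" for j k
  proof -
    have "j = Min (blk P j)" "rnk P (blk P j) = k" using ld[OF j] l by (auto split: if_splits)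
    then show ?thesis using blkBk[OF j] unfolding b_def by simp
  qed
  have one: "(1::nat) \<in> {1..L}" "(1::nat) \<in> {1..n}" using n by auto
  have b1: "b 1 = 1"
  proof -
    define B1 where "B1 = blk P 1"
    have B1P: "B1 \<in> P" "1 \<in> B1" unfolding B1_def using blkP[OF one(1)] by simp_all
    have m1: "Min B1 = 1" using part_Min(2,3)[OF P B1P(1)] B1P(2) by fastforce
    have r1: "rnk P B1 = 1"
    proof (rule ccontr)
      assume "rnk P B1 \<noteq> 1"
      then have "rnk P (Bk 1) < rnk P B1" using Bkr[OF one(2)] rnk_range[OF P B1P(1)] by simp
      then have "Min (Bk 1) < Min B1" using rnk_iff[OF P BkP[OF one(2)] B1P(1)] by simp
      then show False using m1 part_Min(2)[OF P BkP[OF one(2)]] by simp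
    qed
    have "Bk 1 = B1" using Bk_rnk[OF B1P(1)] r1 by simp
    then show ?thesis unfolding b_def using m1 by simp
  qed
  have ord: "b k < b (Suc k)" if k: "k \<in> {1..<n}" for k
  proof -
    have kk: "k \<in> {1..n}" "Suc k \<in> {1..n}" using k by auto
    show ?thesis unfolding b_def using rnk_iff[OF P BkP[OF kk(1)] BkP[OF kk(2)]] Bkr[OF kk(1)] Bkr[OF kk(2)] by simp
  qed
  have box: "b i < j" if j: "j \<in> {1..L}" and l: "letter_at D j = Box i" for j i
  proof -
    have "j \<noteq> Min (blk P j)" "rnk P (blk P j) = i" using ld[OF j] l by (auto split: if_splits)
    moreover have "Min (blk P j) \<le> j" using part_Min(3)[OF P blkP(1)[OF j] blkP(2)[OF j]] .
    ultimately show ?thesis using blkBk[OF j] unfolding b_def by fastforce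
  qed
  have g0: "good0 L n D b" unfolding good0_def using n len val bL bul uq b1 ord by blast
  show "good L n (decode L P) (\<lambda>k. Min (inv_into P (rnk P) k))"
    using g0 box unfolding good_def D_def b_def Bk_def by blast
  have blk_eq: "block L D i = Bk i" if i: "i \<in> {1..n}" for i
  proof -
    have "(letter_at D j = Bullet i \<or> letter_at D j = Box i) \<longleftrightarrow> rnk P (blk P j) = i" if "j \<in> {1..L}" for j
      using ld[OF that] by simp
    then have "block L D i = {j \<in> {1..L}. rnk P (blk P j) = i}" unfolding block_def by blast
    also have "\<dots> = Bk i"
    proof
      show "{j \<in> {1..L}. rnk P (blk P j) = i} \<subseteq> Bk i" using blkBk blkP(2) by fastforce
      show "Bk i \<subseteq> {j \<in> {1..L}. rnk P (blk P j) = i}" using memBk[OF i] Bkr[OF i] by auto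
    qed
    finally show ?thesis .
  qed
  have "blocks L n D = Bk ` {1..n}" unfolding blocks_def using blk_eq by simp
  also have "\<dots> = Bk ` rnk P ` P" using img by simp
  also have "\<dots> = P" using Bk_rnk by (simp add: image_image)
  finally show "blocks L n (decode L P) = P" unfolding D_def .
qed

theorem proposition5p6:
  fixes L n :: nat
  assumes "1 \<le> n" and "n \<le> L"
  shows "bij_betw (blocks L n) (Omega'1 L n)
           {P. partition_on {1..L} P \<and> card P = n}"
proof (rule bij_betw_byWitness[where f' = "decode L"])
  show "\<forall>a\<in>Omega'1 L n. decode L (blocks L n a) = a"
    using Omega_good[OF assms] good_decode by blast
  show "\<forall>a'\<in>{P. partition_on {1..L} P \<and> card P = n}. blocks L n (decode L a') = a'"
    using part_good(2) assms by blast
  show "blocks L n ` Omega'1 L n \<subseteq> {P. partition_on {1..L} P \<and> card P = n}"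
    using Omega_good[OF assms] good_partition(1,2) by blast
  show "decode L ` {P. partition_on {1..L} P \<and> card P = n} \<subseteq> Omega'1 L n"
    using part_good(1) assms good_Omega by blast
qed

end
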